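(* Let $(B_{i,j})_{i,j\in\mathbb{Z}}$ be an infinite matrix with $B_{i,j}=0$ whenever $i\le 0$ or $j\le 0$. Then there is a unique infinite matrix $(A_{i,j})_{i,j\in\mathbb{Z}}$ such that $$B_{i,j}=A_{i,j}-A_{i-1,j}-A_{i,j-1}\quad\text{for all } i,j\in\mathbb{Z}$$ and $A_{0,j}=A_{i,0}=0$ for all $i,j\in\mathbb{Z}$. It is given by $$A_{i,j}=\sum_{k=0}^{\infty}\sum_{l=0}^{k}\binom{k}{l}B_{i-l,j-k+l}.$$
   Context: In the paper the defining relation is written as $B_{i,j}=(\mathrm{id}-(E_i^{-1}+E_j^{-1}))A_{i,j}$, where $E_x$ is the shift operator $E_x a(x)=a(x+1)$; this equals $A_{i,j}-A_{i-1,j}-A_{i,j-1}$. *)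

theory Defs
  imports Complex_Main
begin

end

theory Submission
  imports Defs
begin

lemma zero_grid:
  fixes D :: "int \<Rightarrow> int \<Rightarrow> real"
  assumes rec: "\<And>i j. D i j = D (i - 1) j + D i (j - 1)"
    and z0: "\<And>j. D 0 j = 0" and z1: "\<And>i. D i 0 = 0"
  shows "D i j = 0"
proof -
  have row: "\<forall>j. D i j = 0" if "\<forall>j. D (i - 1) j = 0" for i
  proof
    fix j
    have c: "\<And>j. D i j = D i (j - 1)" using rec that by (metis add_0)
    show "D i j = 0"
    proof (induction j rule: int_induct[where k=0])
      case base then show ?case using z1 by simp
    next
      case (step1 j) then show ?case using c[of "j+1"] by simp
    next
      case (step2 j) then show ?case using c[of j] by simp
    qed
  qed
  have "\<forall>j. D i j = 0"
  proof (induction i rule: int_induct[where k=0])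
    case base then show ?case using z0 by simp
  next
    case (step1 i) then show ?case using row[of "i+1"] by simp
  next
    case (step2 i)
    have "\<And>j. D (i - 1) j = D i j - D i (j - 1)" using rec by (metis add_diff_cancel_right')
    then show ?case using step2 by simp
  qed
  then show ?thesis by simp
qed

context
  fixes B :: "int \<Rightarrow> int \<Rightarrow> real"
  assumes supp: "\<forall>i j. (i \<le> 0 \<or> j \<le> 0) \<longrightarrow> B i j = 0"
begin

definition T :: "nat \<Rightarrow> int \<Rightarrow> int \<Rightarrow> real" where
  "T k i j = (\<Sum>l\<le>k. real (k choose l) * B (i - int l) (j - int k + int l))"

lemma T_zero_big: assumes h: "int k \<ge> i + j - 1" shows "T k i j = 0"
  unfolding T_def
proof (rule sum.neutral, intro ballI)
  fix l assume "l \<in> {..k}"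
  then have "i - int l \<le> 0 \<or> j - int k + int l \<le> 0" using h by auto
  then show "real (k choose l) * B (i - int l) (j - int k + int l) = 0" using supp by auto
qed

lemma T_zero_nonpos: "i \<le> 0 \<or> j \<le> 0 \<Longrightarrow> T k i j = 0"
  unfolding T_def
  by (rule sum.neutral) (use supp in \<open>auto\<close>)

lemma T0: "T 0 i j = B i j"
  unfolding T_def by simp

lemma T_Suc: "T (Suc k) i j = T k (i - 1) j + T k i (j - 1)"
proof -
  have "T (Suc k) i j = B i (j - int k - 1) +
     (\<Sum>l\<le>k. real (Suc k choose Suc l) * B (i - int l - 1) (j - int k + int l))"
    unfolding T_def by (subst sum.atMost_Suc_shift) (simp add: algebra_simps)
  also have "\<dots> = B i (j - int k - 1) +
     (\<Sum>l\<le>k. real (k choose Suc l) * B (i - int l - 1) (j - int k + int l)) +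
     (\<Sum>l\<le>k. real (k choose l) * B (i - int l - 1) (j - int k + int l))"
    by (simp add: sum.distrib algebra_simps)
  also have "(\<Sum>l\<le>k. real (k choose l) * B (i - int l - 1) (j - int k + int l)) = T k (i - 1) j"
    unfolding T_def by (simp add: algebra_simps)
  also have "B i (j - int k - 1) +
     (\<Sum>l\<le>k. real (k choose Suc l) * B (i - int l - 1) (j - int k + int l)) =
     (\<Sum>l\<le>Suc k. real (k choose l) * B (i - int l) (j - 1 - int k + int l))"
    by (subst sum.atMost_Suc_shift) (simp add: algebra_simps)
  also have "\<dots> = T k i (j - 1)"
    unfolding T_def by simp
  finally show ?thesis by simp
qed

lemma T_suminf:
  assumes "N \<ge> nat (i + j)"
  shows "(\<Sum>k. T k i j) = (\<Sum>k<N. T k i j)"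
proof -
  have "(\<lambda>k. T k i j) sums (\<Sum>k<N. T k i j)"
    by (rule sums_finite) (use assms T_zero_big in auto)
  then show ?thesis by (simp add: sums_iff)
qed

end

theorem proposition2:
  fixes B :: "int \<Rightarrow> int \<Rightarrow> real"
  assumes supp: "\<forall>i j. (i \<le> 0 \<or> j \<le> 0) \<longrightarrow> B i j = 0"
  shows "(\<exists>!A :: int \<Rightarrow> int \<Rightarrow> real.
            (\<forall>i j. B i j = A i j - A (i - 1) j - A i (j - 1)) \<and>
            (\<forall>i j. A 0 j = 0 \<and> A i 0 = 0)) \<and>
         (let A = (\<lambda>i j. \<Sum>k. \<Sum>l\<le>k. real (k choose l) * B (i - int l) (j - int k + int l))
          in (\<forall>i j. B i j = A i j - A (i - 1) j - A i (j - 1)) \<and>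
             (\<forall>i j. A 0 j = 0 \<and> A i 0 = 0))"
proof -
  define A where "A = (\<lambda>i j. \<Sum>k. \<Sum>l\<le>k. real (k choose l) * B (i - int l) (j - int k + int l))"
  have AT: "A i j = (\<Sum>k. T B k i j)" for i j
    unfolding A_def T_def[OF supp] by simp
  have P1: "\<forall>i j. B i j = A i j - A (i - 1) j - A i (j - 1)"
  proof (intro allI)
    fix i j :: int
    define N where "N = nat (\<bar>i\<bar> + \<bar>j\<bar>)"
    have e1: "A i j = (\<Sum>k<Suc N. T B k i j)"
      unfolding AT by (rule T_suminf[OF supp]) (unfold N_def, arith)
    have e2: "A (i - 1) j = (\<Sum>k<N. T B k (i - 1) j)"
      unfolding AT by (rule T_suminf[OF supp]) (unfold N_def, arith)
    have e3: "A i (j - 1) = (\<Sum>k<N. T B k i (j - 1))"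
      unfolding AT by (rule T_suminf[OF supp]) (unfold N_def, arith)
    have "(\<Sum>k<Suc N. T B k i j) = T B 0 i j + (\<Sum>k<N. T B (Suc k) i j)"
      by (rule sum.lessThan_Suc_shift)
    also have "\<dots> = B i j + (\<Sum>k<N. T B k (i - 1) j) + (\<Sum>k<N. T B k i (j - 1))"
      by (simp add: T0[OF supp] T_Suc[OF supp] sum.distrib)
    finally show "B i j = A i j - A (i - 1) j - A i (j - 1)"
      using e1 e2 e3 by simp
  qed
  have P2: "\<forall>i j. A 0 j = 0 \<and> A i 0 = 0"
    unfolding AT by (simp add: T_zero_nonpos[OF supp])
  have U: "A' = A" if "\<forall>i j. B i j = A' i j - A' (i - 1) j - A' i (j - 1)"
      "\<forall>i j. A' 0 j = 0 \<and> A' i 0 = 0" for A'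
  proof -
    have "(\<lambda>i j. A' i j - A i j) i j = 0" for i j
    proof (rule zero_grid)
      fix i j
      have "B i j = A' i j - A' (i - 1) j - A' i (j - 1)" using that(1) by blast
      moreover have "B i j = A i j - A (i - 1) j - A i (j - 1)" using P1 by blast
      ultimately show "A' i j - A i j = (A' (i - 1) j - A (i - 1) j) + (A' i (j - 1) - A i (j - 1))"
        by linarith
    next
      fix j show "A' 0 j - A 0 j = 0" using that(2) P2 by simp
    next
      fix i show "A' i 0 - A i 0 = 0" using that(2) P2 by simp
    qed
    then show ?thesis by (auto intro!: ext)
  qed
  have E: "\<exists>!A. (\<forall>i j. B i j = A i j - A (i - 1) j - A i (j - 1)) \<and> (\<forall>i j. A 0 j = 0 \<and> A i 0 = 0)"
  proof (rule ex1I[of _ A])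
    show "(\<forall>i j. B i j = A i j - A (i - 1) j - A i (j - 1)) \<and> (\<forall>i j. A 0 j = 0 \<and> A i 0 = 0)"
      using P1 P2 by (rule conjI)
  next
    fix A' assume "(\<forall>i j. B i j = A' i j - A' (i - 1) j - A' i (j - 1)) \<and> (\<forall>i j. A' 0 j = 0 \<and> A' i 0 = 0)"
    then show "A' = A" using U by blast
  qed
  have G: "?thesis = ((\<exists>!A. (\<forall>i j. B i j = A i j - A (i - 1) j - A i (j - 1)) \<and> (\<forall>i j. A 0 j = 0 \<and> A i 0 = 0)) \<and>
     ((\<forall>i j. B i j = A i j - A (i - 1) j - A i (j - 1)) \<and> (\<forall>i j. A 0 j = 0 \<and> A i 0 = 0)))"
    unfolding Let_def A_def by (rule refl)
  show ?thesis
    unfolding G using E P1 P2 by (intro conjI)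
qed

end
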